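(* Let $\Bbbk$ be a field, $R=\Bbbk[x_1,\dots,x_m]$ with the standard $\mathbb Z^m$-grading, $M$ a finitely generated torsion-free $\mathbb Z^m$-graded $R$-module, and $\mathcal F_\bullet$ a minimal $\mathbb Z^m$-graded free resolution of $M$. Let $C$ be any basis of $F_0$ consisting of homogeneous elements. Then $\mathcal F_\bullet$ has a basis with minimal support $B=\coprod B_n$ consisting of homogeneous elements and such that $B_0=C$.
   Context: For a complex of free modules $\mathcal F_\bullet$ with differentials $f_n$, $f_0\colon F_0\to H_0(\mathcal F_\bullet)$ the canonical projection, and bases $B_n$ of $F_n$, $B=\coprod B_n$: the support of $y=\sum_{c\in B_n}a_cc$ is $\{c\in B_n:a_c\ne0\}$; $y$ is a cycle with minimal support if $y\in\operatorname{Ker}f_n$ and $\operatorname{supp}y$ does not properly contain the support of any nonzero element of $\operatorname{Ker}f_n$; $B$ is a basis with minimal support if $f_n(b)$ is a cycle with minimal support for all $n\ge1$ and $b\in B_n$. A $\mathbb Z^m$-graded free resolution is minimal if its differentials are homogeneous of degree $0$ and $f_n(F_n)\subseteq(x_1,\dots,x_m)F_{n-1}$ for $n\ge1$. *)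

theory Defs
  imports "HOL-Library.Poly_Mapping" "HOL-Library.Function_Algebras"
begin

text \<open>The polynomial ring R = k[x_v | v in 'v] with a finite variable type 'v
  (so m = CARD('v)); monomials are exponent vectors 'v =>0 nat.\<close>

type_synonym ('v, 'k) pring = "('v \<Rightarrow>\<^sub>0 nat) \<Rightarrow>\<^sub>0 'k"

definition var :: "'v \<Rightarrow> ('v, 'k::field) pring" where
  "var i = Poly_Mapping.single (Poly_Mapping.single i 1) 1"

definition mdeg :: "('v \<Rightarrow>\<^sub>0 nat) \<Rightarrow> ('v \<Rightarrow> int)" where
  "mdeg mu = (\<lambda>i. int (Poly_Mapping.lookup mu i))"

text \<open>Graded free module F_n = R(-deg n 0) + ... + R(-deg n (r n - 1)),
  elements are coordinate vectors nat => R vanishing from index r n on.\<close>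

definition Fmod :: "(nat \<Rightarrow> nat) \<Rightarrow> nat \<Rightarrow> (nat \<Rightarrow> ('v, 'k::field) pring) set" where
  "Fmod r n = {v. \<forall>j\<ge>r n. v j = 0}"

definition homog_of :: "(nat \<Rightarrow> nat) \<Rightarrow> (nat \<Rightarrow> nat \<Rightarrow> ('v \<Rightarrow> int)) \<Rightarrow> nat
    \<Rightarrow> ('v \<Rightarrow> int) \<Rightarrow> (nat \<Rightarrow> ('v, 'k::field) pring) \<Rightarrow> bool" where
  "homog_of r deg n a v \<longleftrightarrow> v \<in> Fmod r n \<and>
     (\<forall>j<r n. \<forall>mu\<in>Poly_Mapping.keys (v j). (\<lambda>i. mdeg mu i + deg n j i) = a)"

definition homog :: "(nat \<Rightarrow> nat) \<Rightarrow> (nat \<Rightarrow> nat \<Rightarrow> ('v \<Rightarrow> int)) \<Rightarrow> nat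
    \<Rightarrow> (nat \<Rightarrow> ('v, 'k::field) pring) \<Rightarrow> bool" where
  "homog r deg n v \<longleftrightarrow> (\<exists>a. homog_of r deg n a v)"

text \<open>The differential f_n : F_n -> F_(n-1) (n >= 1), an R-linear map, given by
  its matrix A n (rows indexed by basis of F_(n-1), columns by basis of F_n).\<close>
definition dif :: "(nat \<Rightarrow> nat) \<Rightarrow> (nat \<Rightarrow> nat \<Rightarrow> nat \<Rightarrow> ('v, 'k::field) pring) \<Rightarrow> nat
    \<Rightarrow> (nat \<Rightarrow> ('v, 'k) pring) \<Rightarrow> (nat \<Rightarrow> ('v, 'k) pring)" where
  "dif r A n v = (\<lambda>i. if i < r (n - 1) then (\<Sum>j<r n. A n i j * v j) else 0)"

text \<open>Ker f_n; for n = 0, f_0 is the projection F_0 -> H_0 = F_0 / Im f_1,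
  whose kernel is Im f_1.\<close>
definition kerf :: "(nat \<Rightarrow> nat) \<Rightarrow> (nat \<Rightarrow> nat \<Rightarrow> nat \<Rightarrow> ('v, 'k::field) pring) \<Rightarrow> nat
    \<Rightarrow> (nat \<Rightarrow> ('v, 'k) pring) set" where
  "kerf r A n = (if n = 0 then dif r A 1 ` Fmod r 1
                 else {v \<in> Fmod r n. dif r A n v = 0})"

definition smul :: "('v, 'k::field) pring \<Rightarrow> (nat \<Rightarrow> ('v, 'k) pring) \<Rightarrow> (nat \<Rightarrow> ('v, 'k) pring)" where
  "smul s v = (\<lambda>j. s * v j)"

definition in_maxF :: "(nat \<Rightarrow> nat) \<Rightarrow> nat \<Rightarrow> (nat \<Rightarrow> ('v::finite, 'k::field) pring) \<Rightarrow> bool" where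
  "in_maxF r n v \<longleftrightarrow> (\<exists>w :: 'v \<Rightarrow> (nat \<Rightarrow> ('v, 'k) pring).
      (\<forall>i. w i \<in> Fmod r n) \<and> v = (\<lambda>k. \<Sum>i\<in>UNIV. var i * w i k))"

text \<open>Minimal Z^m-graded free resolution of H_0 = F_0 / Im f_1 (= M).\<close>
definition min_graded_free_resolution ::
  "(nat \<Rightarrow> nat) \<Rightarrow> (nat \<Rightarrow> nat \<Rightarrow> ('v::finite \<Rightarrow> int)) \<Rightarrow> (nat \<Rightarrow> nat \<Rightarrow> nat \<Rightarrow> ('v, 'k::field) pring) \<Rightarrow> bool" where
  "min_graded_free_resolution r deg A \<longleftrightarrow>
     (\<forall>n\<ge>1. \<forall>a v. homog_of r deg n a v \<longrightarrow> homog_of r deg (n - 1) a (dif r A n v)) \<and>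
     (\<forall>n\<ge>1. kerf r A n = dif r A (n + 1) ` Fmod r (n + 1)) \<and>
     (\<forall>n\<ge>1. \<forall>v\<in>Fmod r n. in_maxF r (n - 1) (dif r A n v))"

definition H0_torsion_free :: "(nat \<Rightarrow> nat) \<Rightarrow> (nat \<Rightarrow> nat \<Rightarrow> nat \<Rightarrow> ('v, 'k::field) pring) \<Rightarrow> bool" where
  "H0_torsion_free r A \<longleftrightarrow>
     (\<forall>s v. v \<in> Fmod r 0 \<longrightarrow> smul s v \<in> kerf r A 0 \<longrightarrow> s = 0 \<or> v \<in> kerf r A 0)"

definition is_coord :: "(nat \<Rightarrow> ('v, 'k::field) pring) set \<Rightarrow> (nat \<Rightarrow> ('v, 'k) pring)
    \<Rightarrow> ((nat \<Rightarrow> ('v, 'k) pring) \<Rightarrow> ('v, 'k) pring) \<Rightarrow> bool" where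
  "is_coord B v a \<longleftrightarrow> (\<forall>c. c \<notin> B \<longrightarrow> a c = 0) \<and> finite {c. a c \<noteq> 0} \<and>
      v = (\<lambda>k. \<Sum>c\<in>{c. a c \<noteq> 0}. a c * c k)"

definition is_basis :: "(nat \<Rightarrow> ('v, 'k::field) pring) set \<Rightarrow> (nat \<Rightarrow> ('v, 'k) pring) set \<Rightarrow> bool" where
  "is_basis F B \<longleftrightarrow> B \<subseteq> F \<and> (\<forall>v\<in>F. \<exists>!a. is_coord B v a)"

definition coord :: "(nat \<Rightarrow> ('v, 'k::field) pring) set \<Rightarrow> (nat \<Rightarrow> ('v, 'k) pring)
    \<Rightarrow> (nat \<Rightarrow> ('v, 'k) pring) \<Rightarrow> ('v, 'k) pring" where
  "coord B v = (THE a. is_coord B v a)"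

definition supp :: "(nat \<Rightarrow> ('v, 'k::field) pring) set \<Rightarrow> (nat \<Rightarrow> ('v, 'k) pring)
    \<Rightarrow> (nat \<Rightarrow> ('v, 'k) pring) set" where
  "supp B y = {c \<in> B. coord B y c \<noteq> 0}"

definition cycle_min_supp :: "(nat \<Rightarrow> nat) \<Rightarrow> (nat \<Rightarrow> nat \<Rightarrow> nat \<Rightarrow> ('v, 'k::field) pring)
    \<Rightarrow> (nat \<Rightarrow> (nat \<Rightarrow> ('v, 'k) pring) set) \<Rightarrow> nat \<Rightarrow> (nat \<Rightarrow> ('v, 'k) pring) \<Rightarrow> bool" where
  "cycle_min_supp r A B n y \<longleftrightarrow> y \<in> kerf r A n \<and>
     \<not> (\<exists>z\<in>kerf r A n. z \<noteq> 0 \<and> supp (B n) z \<subset> supp (B n) y)"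

definition basis_min_supp :: "(nat \<Rightarrow> nat) \<Rightarrow> (nat \<Rightarrow> nat \<Rightarrow> nat \<Rightarrow> ('v, 'k::field) pring)
    \<Rightarrow> (nat \<Rightarrow> (nat \<Rightarrow> ('v, 'k) pring) set) \<Rightarrow> bool" where
  "basis_min_supp r A B \<longleftrightarrow> (\<forall>n. is_basis (Fmod r n) (B n)) \<and>
     (\<forall>n\<ge>1. \<forall>b\<in>B n. cycle_min_supp r A B (n - 1) (dif r A n b))"

end

theory Submission
  imports Defs
begin


definition mmon :: "('v::finite \<Rightarrow> int) \<Rightarrow> ('v \<Rightarrow>\<^sub>0 nat)" where
  "mmon d = Abs_poly_mapping (\<lambda>i. nat (d i))"

definition nonneg :: "('v \<Rightarrow> int) \<Rightarrow> bool" where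
  "nonneg d \<longleftrightarrow> (\<forall>i. 0 \<le> d i)"

lemma lookup_mono: "Poly_Mapping.lookup (mmon d) = (\<lambda>i. nat (d i))"
  unfolding mmon_def by (rule lookup_Abs_poly_mapping) simp

lemma mdeg_mono: "nonneg d \<Longrightarrow> mdeg (mmon d) = d"
  by (auto simp: mdeg_def lookup_mono nonneg_def)

lemma mono_mdeg: "mmon (mdeg (mu::'v::finite \<Rightarrow>\<^sub>0 nat)) = mu"
  by (rule poly_mapping_eqI) (simp add: lookup_mono mdeg_def)

lemma nonneg_mdeg: "nonneg (mdeg mu)"
  by (simp add: nonneg_def mdeg_def)

lemma mdeg_add: "mdeg (mu + nu) = mdeg mu + mdeg nu"
  by (simp add: mdeg_def lookup_add fun_eq_iff)

lemma mdeg_inj: "mdeg mu = mdeg nu \<Longrightarrow> mu = nu"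
  by (rule poly_mapping_eqI) (metis mdeg_def of_nat_eq_iff)

lemma mdeg_eq_iff: "mdeg (mu::'v::finite \<Rightarrow>\<^sub>0 nat) = d \<longleftrightarrow> nonneg d \<and> mu = mmon d"
  using mdeg_mono mono_mdeg nonneg_mdeg by metis

lemma mono_add: "nonneg d \<Longrightarrow> nonneg e \<Longrightarrow> mmon d + mmon e = mmon (d + e)"
  by (rule poly_mapping_eqI) (auto simp: lookup_add lookup_mono nonneg_def nat_add_distrib)

lemma nonneg_add: "nonneg d \<Longrightarrow> nonneg e \<Longrightarrow> nonneg (d + e)"
  by (auto simp: nonneg_def)

definition hp :: "('v \<Rightarrow> int) \<Rightarrow> ('v, 'k::field) pring \<Rightarrow> bool" where
  "hp d p \<longleftrightarrow> (\<forall>mu\<in>Poly_Mapping.keys p. mdeg mu = d)"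

definition pproj :: "('v::finite \<Rightarrow> int) \<Rightarrow> ('v, 'k::field) pring \<Rightarrow> ('v, 'k) pring" where
  "pproj d p = (if nonneg d then Poly_Mapping.single (mmon d) (Poly_Mapping.lookup p (mmon d)) else 0)"

lemma lookup_single_mult:
  "Poly_Mapping.lookup (Poly_Mapping.single nu b * p) (nu + mu) = b * Poly_Mapping.lookup (p::('v, 'k::field) pring) mu"
proof -
  have "Poly_Mapping.lookup (Poly_Mapping.single nu b * p) (nu + mu) =
     (\<Sum>l. (b when nu = l) * (\<Sum>q. Poly_Mapping.lookup p q when nu + mu = l + q))"
    by (simp add: lookup_mult lookup_single)
  also have "\<dots> = (\<Sum>l. (b * (\<Sum>q. Poly_Mapping.lookup p q when nu + mu = l + q)) when nu = l)"
    by (simp add: when_mult)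
  also have "\<dots> = b * (\<Sum>q. Poly_Mapping.lookup p q when nu + mu = nu + q)"
    by simp
  also have "(\<Sum>q. Poly_Mapping.lookup p q when nu + mu = nu + q) = (\<Sum>q. Poly_Mapping.lookup p q when mu = q)"
    by simp
  finally show ?thesis by simp
qed

lemma keys_single_mult:
  "Poly_Mapping.keys (Poly_Mapping.single nu b * (p::('v, 'k::field) pring)) \<subseteq> (\<lambda>mu. nu + mu) ` Poly_Mapping.keys p"
  using keys_mult[of "Poly_Mapping.single nu b" p]
  by (auto split: if_splits simp: keys_single)

lemma lookup_single_mult_other:
  "\<not> (\<exists>mu. k = nu + mu) \<Longrightarrow> Poly_Mapping.lookup (Poly_Mapping.single nu b * (p::('v, 'k::field) pring)) k = 0"
  using keys_single_mult[of nu b p] by (auto simp: in_keys_iff)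

lemma single_mult_eq_0:
  assumes "Poly_Mapping.single nu b * (p::('v, 'k::field) pring) = 0" "b \<noteq> 0"
  shows "p = 0"
proof (rule poly_mapping_eqI)
  fix mu
  have "b * Poly_Mapping.lookup p mu = 0" using lookup_single_mult[of nu b p mu] assms by simp
  then show "Poly_Mapping.lookup p mu = Poly_Mapping.lookup 0 mu" using assms by simp
qed

lemma hp_cases:
  assumes "hp e (q::('v::finite, 'k::field) pring)"
  shows "q = Poly_Mapping.single (mmon e) (Poly_Mapping.lookup q (mmon e)) \<and> (q \<noteq> 0 \<longrightarrow> nonneg e)"
proof -
  have k: "\<And>mu. mu \<in> Poly_Mapping.keys q \<Longrightarrow> nonneg e \<and> mu = mmon e"
    using assms by (auto simp: hp_def mdeg_eq_iff)
  have "q = Poly_Mapping.single (mmon e) (Poly_Mapping.lookup q (mmon e))"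
  proof (rule poly_mapping_eqI)
    fix mu show "Poly_Mapping.lookup q mu = Poly_Mapping.lookup (Poly_Mapping.single (mmon e) (Poly_Mapping.lookup q (mmon e))) mu"
      using k[of mu] by (cases "mu = mmon e") (auto simp: lookup_single in_keys_iff)
  qed
  moreover have "q \<noteq> 0 \<longrightarrow> nonneg e" using k by (metis all_not_in_conv keys_eq_empty)
  ultimately show ?thesis by blast
qed

lemma hp_single: "nonneg e \<Longrightarrow> hp e (Poly_Mapping.single (mmon e) b)"
  by (auto simp: hp_def mdeg_mono split: if_splits)

lemma hp_zero[simp]: "hp e 0"
  by (simp add: hp_def)

lemma pproj_hp: "hp d (pproj d p)"
  by (simp add: pproj_def hp_single)

lemma hp_pproj: "hp d p \<Longrightarrow> pproj d p = p"
  using hp_cases[of d p] by (auto simp: pproj_def)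

lemma pproj_add: "pproj d (p + q) = pproj d p + pproj d q"
  by (simp add: pproj_def lookup_add single_add)

lemma pproj_diff: "pproj d (p - q) = pproj d p - pproj d q"
  by (simp add: pproj_def lookup_minus single_diff)

lemma pproj_zero[simp]: "pproj d 0 = 0"
  by (simp add: pproj_def)

lemma pproj_sum: "pproj d (\<Sum>x\<in>S. f x) = (\<Sum>x\<in>S. pproj d (f x))"
  by (induction S rule: infinite_finite_induct) (auto simp: pproj_add)

lemma pproj_single_mult:
  "pproj d (Poly_Mapping.single nu b * p) = Poly_Mapping.single nu b * pproj (d - mdeg nu) (p::('v::finite, 'k::field) pring)"
proof (cases "nonneg d")
  case True
  show ?thesis
  proof (cases "nonneg (d - mdeg nu)")
    case True2: True
    have m: "mmon d = nu + mmon (d - mdeg nu)"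
      using mono_add[OF nonneg_mdeg True2, of nu] by (simp add: mono_mdeg)
    show ?thesis using True True2
      by (simp add: pproj_def mult_single m[symmetric] lookup_single_mult[of nu b p "mmon (d - mdeg nu)", folded m])
  next
    case False
    have "\<not> (\<exists>mu. mmon d = nu + mu)"
    proof
      assume "\<exists>mu. mmon d = nu + mu"
      then obtain mu where "mmon d = nu + mu" by blast
      then have "mdeg (mmon d) = mdeg nu + mdeg mu" by (simp add: mdeg_add)
      then have "d - mdeg nu = mdeg mu" using mdeg_mono[OF True] by simp
      then show False using False nonneg_mdeg by metis
    qed
    then show ?thesis using True False by (simp add: pproj_def lookup_single_mult_other)
  qed
next
  case False
  then have "\<not> nonneg (d - mdeg nu)" using nonneg_mdeg[of nu] unfolding nonneg_def
    by (metis diff_ge_0_iff_ge dual_order.trans minus_apply)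
  then show ?thesis using False by (simp add: pproj_def)
qed

lemma pproj_mult_hp:
  assumes "hp e q"
  shows "pproj d (p * q) = pproj (d - e) p * (q::('v::finite, 'k::field) pring)"
proof (cases "q = 0")
  case True then show ?thesis by simp
next
  case False
  with hp_cases[OF assms] have q: "q = Poly_Mapping.single (mmon e) (Poly_Mapping.lookup q (mmon e))" and "nonneg e" by auto
  then have "mdeg (mmon e) = e" by (simp add: mdeg_mono)
  then show ?thesis using pproj_single_mult[of d "mmon e" "Poly_Mapping.lookup q (mmon e)" p] q
    by (metis mult.commute)
qed

lemma hp_iff_keys: "hp (a - b) p \<longleftrightarrow> (\<forall>mu\<in>Poly_Mapping.keys p. (\<lambda>i. mdeg mu i + b i) = a)"
  by (auto simp: hp_def fun_eq_iff algebra_simps)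




definition vproj :: "(nat \<Rightarrow> nat) \<Rightarrow> (nat \<Rightarrow> nat \<Rightarrow> ('v::finite \<Rightarrow> int)) \<Rightarrow> nat \<Rightarrow> ('v \<Rightarrow> int)
   \<Rightarrow> (nat \<Rightarrow> ('v, 'k::field) pring) \<Rightarrow> (nat \<Rightarrow> ('v, 'k) pring)" where
  "vproj r deg n a v = (\<lambda>j. if j < r n then pproj (a - deg n j) (v j) else 0)"

definition lc :: "((nat \<Rightarrow> ('v, 'k::field) pring) \<Rightarrow> ('v, 'k) pring) \<Rightarrow> (nat \<Rightarrow> ('v, 'k) pring) set
   \<Rightarrow> (nat \<Rightarrow> ('v, 'k) pring)" where
  "lc a S = (\<lambda>k. \<Sum>c\<in>S. a c * c k)"

lemma homog_of_iff:
  "homog_of r deg n a v \<longleftrightarrow> v \<in> Fmod r n \<and> (\<forall>j<r n. hp (a - deg n j) (v j))"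
  by (simp add: homog_of_def hp_iff_keys)

lemma Fmod_iff: "v \<in> Fmod r n \<longleftrightarrow> (\<forall>j\<ge>r n. v j = 0)"
  by (simp add: Fmod_def)

lemma vproj_Fmod[simp]: "vproj r deg n a v \<in> Fmod r n"
  unfolding Fmod_def vproj_def by auto

lemma homog_of_vproj: "homog_of r deg n a (vproj r deg n a v)"
  using vproj_Fmod[of r deg n a v] by (simp add: homog_of_iff) (simp add: vproj_def pproj_hp)

lemma homog_of_vproj_iff:
  "homog_of r deg n a v \<longleftrightarrow> v \<in> Fmod r n \<and> vproj r deg n a v = v"
proof
  assume h: "homog_of r deg n a v"
  then show "v \<in> Fmod r n \<and> vproj r deg n a v = v"
    by (auto simp: homog_of_iff vproj_def fun_eq_iff hp_pproj Fmod_def)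
next
  assume "v \<in> Fmod r n \<and> vproj r deg n a v = v"
  then show "homog_of r deg n a v" by (metis homog_of_vproj)
qed

lemma homog_of_Fmod: "homog_of r deg n a v \<Longrightarrow> v \<in> Fmod r n"
  by (simp add: homog_of_def)

lemma lc_Fmod: "S \<subseteq> Fmod r n \<Longrightarrow> lc a S \<in> Fmod r n"
  by (auto simp: lc_def Fmod_def intro!: sum.neutral)

lemma Fmod_add: "v \<in> Fmod r n \<Longrightarrow> w \<in> Fmod r n \<Longrightarrow> v + w \<in> Fmod r n"
  by (simp add: Fmod_def)
lemma Fmod_diff: "v \<in> Fmod r n \<Longrightarrow> w \<in> Fmod r n \<Longrightarrow> v - w \<in> Fmod r n"
  by (simp add: Fmod_def)
lemma Fmod_smul: "v \<in> Fmod r n \<Longrightarrow> smul s v \<in> Fmod r n"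
  by (simp add: Fmod_def smul_def)
lemma Fmod_zero[simp]: "0 \<in> Fmod r n"
  by (simp add: Fmod_def)

lemma vproj_lc:
  assumes "\<forall>c\<in>S. homog_of r deg n (dg c) c"
  shows "vproj r deg n a (lc co S) = lc (\<lambda>c. pproj (a - dg c) (co c)) S"
proof
  fix k
  show "vproj r deg n a (lc co S) k = lc (\<lambda>c. pproj (a - dg c) (co c)) S k"
  proof (cases "k < r n")
    case True
    have "\<And>c. c \<in> S \<Longrightarrow> pproj (a - deg n k) (co c * c k) = pproj (a - dg c) (co c) * c k"
    proof -
      fix c assume "c \<in> S"
      then have "hp (dg c - deg n k) (c k)" using assms True by (auto simp: homog_of_iff)
      from pproj_mult_hp[OF this, of "a - deg n k" "co c"]
      show "pproj (a - deg n k) (co c * c k) = pproj (a - dg c) (co c) * c k"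
        by (simp add: algebra_simps)
    qed
    then show ?thesis using True by (simp add: vproj_def lc_def pproj_sum)
  next
    case False
    then have "\<forall>c\<in>S. c k = 0" using assms by (auto simp: homog_of_iff Fmod_def)
    then show ?thesis using False by (auto simp: vproj_def lc_def intro!: sum.neutral)
  qed
qed

lemma vproj_add: "vproj r deg n a (v + w) = vproj r deg n a v + vproj r deg n a w"
  by (simp add: vproj_def fun_eq_iff pproj_add)
lemma vproj_diff: "vproj r deg n a (v - w) = vproj r deg n a v - vproj r deg n a w"
  by (simp add: vproj_def fun_eq_iff pproj_diff)



lemma lc_mono_neutral:
  assumes "finite S" "{c. a c \<noteq> 0} \<subseteq> S" "finite T" "{c. a c \<noteq> 0} \<subseteq> T"
  shows "lc a S = lc a T"
proof -
  have "lc a S = lc a (S \<inter> T)"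
    unfolding lc_def by (rule ext, rule sum.mono_neutral_right) (use assms in auto)
  also have "\<dots> = lc a T"
    unfolding lc_def by (rule ext, rule sum.mono_neutral_left) (use assms in auto)
  finally show ?thesis .
qed

lemma is_coord_lc:
  assumes "is_coord B v a" "finite S" "{c. a c \<noteq> 0} \<subseteq> S"
  shows "v = lc a S"
proof -
  have "v = lc a {c. a c \<noteq> 0}" using assms by (simp add: is_coord_def lc_def)
  also have "\<dots> = lc a S" by (rule lc_mono_neutral) (use assms in \<open>auto simp: is_coord_def\<close>)
  finally show ?thesis .
qed

lemma is_coordI:
  assumes "\<And>c. c \<notin> B \<Longrightarrow> a c = 0" "finite S" "{c. a c \<noteq> 0} \<subseteq> S" "v = lc a S"
  shows "is_coord B v a"
proof -
  have f: "finite {c. a c \<noteq> 0}" using assms finite_subset by blast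
  have "lc a S = lc a {c. a c \<noteq> 0}" by (rule lc_mono_neutral) (use assms f in auto)
  then show ?thesis using assms f by (simp add: is_coord_def lc_def)
qed

lemma is_coord_fin: "is_coord B v a \<Longrightarrow> finite {c. a c \<noteq> 0}"
  by (simp add: is_coord_def)
lemma is_coord_out: "is_coord B v a \<Longrightarrow> c \<notin> B \<Longrightarrow> a c = 0"
  by (simp add: is_coord_def)

lemma coord_is:
  assumes "is_basis F B" "v \<in> F"
  shows "is_coord B v (coord B v)"
proof -
  have "\<exists>!a. is_coord B v a" using assms by (simp add: is_basis_def)
  then show ?thesis unfolding coord_def by (rule theI')
qed

lemma coord_eq:
  assumes "is_basis F B" "v \<in> F" "is_coord B v a"
  shows "coord B v = a"
proof -
  have u: "\<exists>!a. is_coord B v a" using assms by (simp add: is_basis_def)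
  show ?thesis using u coord_is[OF assms(1,2)] assms(3) by blast
qed

lemma coord_lc:
  assumes "is_basis F B" "v \<in> F" "finite S" "{c. coord B v c \<noteq> 0} \<subseteq> S"
  shows "v = lc (coord B v) S"
  using is_coord_lc[OF coord_is[OF assms(1,2)] assms(3,4)] .

lemma coord_out: "is_basis F B \<Longrightarrow> v \<in> F \<Longrightarrow> c \<notin> B \<Longrightarrow> coord B v c = 0"
  using coord_is is_coord_out by blast

lemma coord_fin: "is_basis F B \<Longrightarrow> v \<in> F \<Longrightarrow> finite {c. coord B v c \<noteq> 0}"
  using coord_is is_coord_fin by blast

lemma coord_ext:
  assumes "is_basis F B" "v \<in> F" "w \<in> F" "coord B v = coord B w"
  shows "v = w"
proof -
  have "v = lc (coord B v) {c. coord B v c \<noteq> 0}"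
    using coord_is[OF assms(1,2)] by (simp add: is_coord_def lc_def)
  moreover have "w = lc (coord B w) {c. coord B w c \<noteq> 0}"
    using coord_is[OF assms(1,3)] by (simp add: is_coord_def lc_def)
  ultimately show ?thesis using assms(4) by simp
qed

lemma lc_add: "lc a S + lc b S = lc (\<lambda>c. a c + b c) S"
  by (simp add: lc_def fun_eq_iff sum.distrib algebra_simps)
lemma lc_diff: "lc a S - lc b S = lc (\<lambda>c. a c - b c) S"
  by (simp add: lc_def fun_eq_iff sum_subtractf algebra_simps)
lemma lc_smul: "smul s (lc a S) = lc (\<lambda>c. s * a c) S"
  by (simp add: lc_def fun_eq_iff smul_def sum_distrib_left algebra_simps)

lemma coord_add:
  assumes B: "is_basis (Fmod r n) B" and v: "v \<in> Fmod r n" and w: "w \<in> Fmod r n"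
  shows "coord B (v + w) = (\<lambda>c. coord B v c + coord B w c)"
proof (rule coord_eq[OF B Fmod_add[OF v w]])
  let ?S = "{c. coord B v c \<noteq> 0} \<union> {c. coord B w c \<noteq> 0}"
  have f: "finite ?S" using coord_fin[OF B v] coord_fin[OF B w] by simp
  show "is_coord B (v + w) (\<lambda>c. coord B v c + coord B w c)"
  proof (rule is_coordI[OF _ f])
    have e1: "lc (coord B v) ?S = v" by (rule coord_lc[OF B v f, symmetric]) auto
    have e2: "lc (coord B w) ?S = w" by (rule coord_lc[OF B w f, symmetric]) auto
    have "lc (\<lambda>c. coord B v c + coord B w c) ?S = lc (coord B v) ?S + lc (coord B w) ?S"
      by (rule lc_add[symmetric])
    then show "v + w = lc (\<lambda>c. coord B v c + coord B w c) ?S" by (simp only: e1 e2)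
  qed (auto simp: coord_out[OF B v] coord_out[OF B w])
qed

lemma coord_diff:
  assumes B: "is_basis (Fmod r n) B" and v: "v \<in> Fmod r n" and w: "w \<in> Fmod r n"
  shows "coord B (v - w) = (\<lambda>c. coord B v c - coord B w c)"
proof (rule coord_eq[OF B Fmod_diff[OF v w]])
  let ?S = "{c. coord B v c \<noteq> 0} \<union> {c. coord B w c \<noteq> 0}"
  have f: "finite ?S" using coord_fin[OF B v] coord_fin[OF B w] by simp
  show "is_coord B (v - w) (\<lambda>c. coord B v c - coord B w c)"
  proof (rule is_coordI[OF _ f])
    have e1: "lc (coord B v) ?S = v" by (rule coord_lc[OF B v f, symmetric]) auto
    have e2: "lc (coord B w) ?S = w" by (rule coord_lc[OF B w f, symmetric]) auto
    have "lc (\<lambda>c. coord B v c - coord B w c) ?S = lc (coord B v) ?S - lc (coord B w) ?S"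
      by (rule lc_diff[symmetric])
    then show "v - w = lc (\<lambda>c. coord B v c - coord B w c) ?S" by (simp only: e1 e2)
  qed (auto simp: coord_out[OF B v] coord_out[OF B w])
qed

lemma coord_smul:
  assumes B: "is_basis (Fmod r n) B" and v: "v \<in> Fmod r n"
  shows "coord B (smul s v) = (\<lambda>c. s * coord B v c)"
proof (rule coord_eq[OF B Fmod_smul[OF v]])
  let ?S = "{c. coord B v c \<noteq> 0}"
  have f: "finite ?S" using coord_fin[OF B v] by simp
  show "is_coord B (smul s v) (\<lambda>c. s * coord B v c)"
  proof (rule is_coordI[OF _ f])
    have e1: "lc (coord B v) ?S = v" by (rule coord_lc[OF B v f, symmetric]) auto
    have "lc (\<lambda>c. s * coord B v c) ?S = smul s (lc (coord B v) ?S)" by (rule lc_smul[symmetric])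
    then show "smul s v = lc (\<lambda>c. s * coord B v c) ?S" by (simp only: e1)
  qed (auto simp: coord_out[OF B v])
qed

lemma coord_zero:
  assumes B: "is_basis (Fmod r n) B"
  shows "coord B 0 = (\<lambda>c. 0)"
  by (rule coord_eq[OF B Fmod_zero], rule is_coordI[of _ _ "{}"]) (auto simp: lc_def fun_eq_iff)

lemma coord_basis:
  assumes B: "is_basis (Fmod r n) B" and c: "c \<in> B"
  shows "coord B c = (\<lambda>x. if x = c then 1 else 0)"
proof (rule coord_eq[OF B])
  show "c \<in> Fmod r n" using B c by (auto simp: is_basis_def)
  show "is_coord B c (\<lambda>x. if x = c then 1 else 0)"
    by (rule is_coordI[of _ _ "{c}"]) (use c in \<open>auto simp: lc_def\<close>)
qed

lemma zero_notin_basis: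
  assumes B: "is_basis (Fmod r n) B" shows "0 \<notin> B"
proof
  assume "0 \<in> B"
  then have "coord B 0 0 = 1" using coord_basis[OF B] by simp
  moreover have "coord B 0 0 = 0" by (simp add: coord_zero[OF B])
  ultimately show False by simp
qed

lemma supp_empty:
  assumes B: "is_basis (Fmod r n) B" and v: "v \<in> Fmod r n" and "supp B v = {}"
  shows "v = 0"
proof (rule coord_ext[OF B v Fmod_zero])
  show "coord B v = coord B 0"
    using assms coord_out[OF B v] unfolding coord_zero[OF B] supp_def by (auto simp: fun_eq_iff)
qed

lemma supp_finite:
  assumes B: "is_basis (Fmod r n) B" and v: "v \<in> Fmod r n"
  shows "finite (supp B v)"
  using coord_fin[OF B v] by (rule rev_finite_subset) (auto simp: supp_def)

definition dgf :: "(nat \<Rightarrow> nat) \<Rightarrow> (nat \<Rightarrow> nat \<Rightarrow> ('v::finite \<Rightarrow> int)) \<Rightarrow> nat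
   \<Rightarrow> (nat \<Rightarrow> ('v, 'k::field) pring) \<Rightarrow> ('v \<Rightarrow> int)" where
  "dgf r deg n c = (SOME a. homog_of r deg n a c)"

lemma dgf: "homog r deg n c \<Longrightarrow> homog_of r deg n (dgf r deg n c) c"
  using someI_ex[of "\<lambda>a. homog_of r deg n a c"] unfolding dgf_def homog_def by blast

lemma coord_vproj:
  assumes B: "is_basis (Fmod r n) B" and H: "\<forall>c\<in>B. homog r deg n c" and v: "v \<in> Fmod r n"
  shows "coord B (vproj r deg n a v) = (\<lambda>c. pproj (a - dgf r deg n c) (coord B v c))"
proof (rule coord_eq[OF B vproj_Fmod])
  let ?S = "{c. coord B v c \<noteq> 0}"
  have f: "finite ?S" using coord_fin[OF B v] by simp
  have SB: "?S \<subseteq> B" using coord_out[OF B v] by auto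
  show "is_coord B (vproj r deg n a v) (\<lambda>c. pproj (a - dgf r deg n c) (coord B v c))"
  proof (rule is_coordI[OF _ f])
    have "vproj r deg n a v = vproj r deg n a (lc (coord B v) ?S)"
      using coord_lc[OF B v f] by simp
    also have "\<dots> = lc (\<lambda>c. pproj (a - dgf r deg n c) (coord B v c)) ?S"
      by (rule vproj_lc) (use SB H dgf in blast)
    finally show "vproj r deg n a v = lc (\<lambda>c. pproj (a - dgf r deg n c) (coord B v c)) ?S" .
  qed (auto simp: coord_out[OF B v])
qed

lemma coord_homog:
  assumes B: "is_basis (Fmod r n) B" and H: "\<forall>c\<in>B. homog r deg n c" and y: "homog_of r deg n a y"
  shows "hp (a - dgf r deg n c) (coord B y c)"
proof -
  have "y \<in> Fmod r n" "vproj r deg n a y = y" using y homog_of_vproj_iff by blast+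
  then have "coord B y c = pproj (a - dgf r deg n c) (coord B y c)"
    using coord_vproj[OF B H, of y a] by metis
  then show ?thesis by (metis pproj_hp)
qed

lemma homog_by_coord:
  assumes B: "is_basis (Fmod r n) B" and H: "\<forall>c\<in>B. homog r deg n c" and v: "v \<in> Fmod r n"
    and hc: "\<And>c. c \<in> B \<Longrightarrow> hp (a - dgf r deg n c) (coord B v c)"
  shows "homog_of r deg n a v"
proof -
  have "coord B (vproj r deg n a v) = coord B v"
    unfolding coord_vproj[OF B H v]
  proof (rule ext)
    fix x show "pproj (a - dgf r deg n x) (coord B v x) = coord B v x"
      by (cases "x \<in> B") (auto simp: hc hp_pproj coord_out[OF B v])
  qed
  then have "vproj r deg n a v = v" by (rule coord_ext[OF B vproj_Fmod v])
  then show ?thesis using v homog_of_vproj_iff by blast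
qed




definition ev :: "nat \<Rightarrow> (nat \<Rightarrow> ('v, 'k::field) pring)" where
  "ev j = (\<lambda>k. if k = j then 1 else 0)"

lemma dif_add: "dif r A n (v + w) = dif r A n v + dif r A n w"
  by (simp add: dif_def fun_eq_iff sum.distrib algebra_simps)
lemma dif_diff: "dif r A n (v - w) = dif r A n v - dif r A n w"
  by (simp add: dif_def fun_eq_iff sum_subtractf algebra_simps)
lemma dif_smul: "dif r A n (smul s v) = smul s (dif r A n v)"
  by (simp add: dif_def fun_eq_iff smul_def sum_distrib_left algebra_simps)
lemma dif_zero[simp]: "dif r A n 0 = 0"
  by (simp add: dif_def fun_eq_iff)
lemma dif_Fmod: "dif r A (Suc m) v \<in> Fmod r m"
  by (simp add: dif_def Fmod_def)

lemma dif_ev: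
  assumes "j < r (Suc m)" "i < r m" shows "dif r A (Suc m) (ev j) i = A (Suc m) i j"
proof -
  have "(\<Sum>ja<r (Suc m). A (Suc m) i ja * ev j ja) = (\<Sum>ja<r (Suc m). if ja = j then A (Suc m) i ja else 0)"
    by (rule sum.cong) (auto simp: ev_def)
  also have "\<dots> = A (Suc m) i j" using assms by simp
  finally show ?thesis using assms by (simp add: dif_def)
qed

lemma ev_homog: "j < r n \<Longrightarrow> homog_of r deg n (deg n j) (ev j :: nat \<Rightarrow> ('v::finite, 'k::field) pring)"
  by (auto simp: homog_of_def ev_def Fmod_def mdeg_def fun_eq_iff)

locale mres =
  fixes r :: "nat \<Rightarrow> nat" and deg :: "nat \<Rightarrow> nat \<Rightarrow> ('v::finite \<Rightarrow> int)"
    and A :: "nat \<Rightarrow> nat \<Rightarrow> nat \<Rightarrow> ('v, 'k::field) pring"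
  assumes mgr: "min_graded_free_resolution r deg A"
    and tf: "H0_torsion_free r A"
begin

definition K :: "nat \<Rightarrow> (nat \<Rightarrow> ('v, 'k) pring) set" where
  "K m = dif r A (Suc m) ` Fmod r (Suc m)"

lemma dif_homog: "homog_of r deg (Suc m) a v \<Longrightarrow> homog_of r deg m a (dif r A (Suc m) v)"
  using mgr unfolding min_graded_free_resolution_def by (metis diff_Suc_1 le_add1 plus_1_eq_Suc)

lemma A_hp:
  assumes "i < r m" "j < r (Suc m)"
  shows "hp (deg (Suc m) j - deg m i) (A (Suc m) i j)"
proof -
  have "homog_of r deg m (deg (Suc m) j) (dif r A (Suc m) (ev j))"
    using dif_homog ev_homog assms(2) by blast
  then have "hp (deg (Suc m) j - deg m i) (dif r A (Suc m) (ev j) i)"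
    using assms(1) by (simp add: homog_of_iff)
  then show ?thesis using dif_ev[where A=A, OF assms(2,1)] by simp
qed

lemma dif_vproj: "dif r A (Suc m) (vproj r deg (Suc m) a v) = vproj r deg m a (dif r A (Suc m) v)"
proof
  fix i
  show "dif r A (Suc m) (vproj r deg (Suc m) a v) i = vproj r deg m a (dif r A (Suc m) v) i"
  proof (cases "i < r m")
    case True
    have "\<And>j. j < r (Suc m) \<Longrightarrow> pproj (a - deg m i) (A (Suc m) i j * v j) =
            A (Suc m) i j * pproj (a - deg (Suc m) j) (v j)"
    proof -
      fix j assume j: "j < r (Suc m)"
      have "pproj (a - deg m i) (v j * A (Suc m) i j) =
              pproj (a - deg m i - (deg (Suc m) j - deg m i)) (v j) * A (Suc m) i j"
        by (rule pproj_mult_hp[OF A_hp[OF True j]])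
      then show "pproj (a - deg m i) (A (Suc m) i j * v j) = A (Suc m) i j * pproj (a - deg (Suc m) j) (v j)"
        by (simp add: mult.commute)
    qed
    then show ?thesis using True by (simp add: dif_def vproj_def pproj_sum)
  next
    case False then show ?thesis by (simp add: dif_def vproj_def)
  qed
qed

lemma kerf_K: "kerf r A m = K m"
proof (cases m)
  case 0 then show ?thesis by (simp add: kerf_def K_def)
next
  case (Suc m')
  then show ?thesis using mgr unfolding min_graded_free_resolution_def K_def
    by (metis Suc_eq_plus1 le_add2 plus_1_eq_Suc)
qed

lemma K_Suc: "K (Suc m) = {v \<in> Fmod r (Suc m). dif r A (Suc m) v = 0}"
  using kerf_K[of "Suc m"] by (simp add: kerf_def)

lemma K_Fmod: "v \<in> K m \<Longrightarrow> v \<in> Fmod r m"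
  by (auto simp: K_def dif_Fmod)

lemma K_add: "v \<in> K m \<Longrightarrow> w \<in> K m \<Longrightarrow> v + w \<in> K m"
  unfolding K_def by (auto simp: dif_add[symmetric] intro!: imageI Fmod_add)
lemma K_diff: "v \<in> K m \<Longrightarrow> w \<in> K m \<Longrightarrow> v - w \<in> K m"
  unfolding K_def by (auto simp: dif_diff[symmetric] intro!: imageI Fmod_diff)
lemma K_smul: "v \<in> K m \<Longrightarrow> smul s v \<in> K m"
  unfolding K_def by (auto simp: dif_smul[symmetric] intro!: imageI Fmod_smul)
lemma K_vproj: "v \<in> K m \<Longrightarrow> vproj r deg m a v \<in> K m"
  unfolding K_def by (auto simp: dif_vproj[symmetric] intro!: imageI)

lemma smul_single_eq_0: "smul (Poly_Mapping.single mu b) v = 0 \<Longrightarrow> b \<noteq> 0 \<Longrightarrow> v = 0"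
  by (auto simp: smul_def fun_eq_iff dest: single_mult_eq_0)

lemma K_sat:
  assumes v: "v \<in> Fmod r m" and b: "b \<noteq> 0" and s: "smul (Poly_Mapping.single mu b) v \<in> K m"
  shows "v \<in> K m"
proof (cases m)
  case 0
  have "Poly_Mapping.single mu b \<noteq> 0" using b by (metis lookup_single_eq lookup_zero)
  then show ?thesis using tf v s 0 kerf_K[of 0] unfolding H0_torsion_free_def by blast
next
  case (Suc m')
  then have "dif r A (Suc m') (smul (Poly_Mapping.single mu b) v) = 0" using s K_Suc by blast
  then have "dif r A (Suc m') v = 0" using b by (simp add: dif_smul smul_single_eq_0)
  then show ?thesis using Suc v K_Suc by blast
qed

end



lemma lc_insert: "finite T \<Longrightarrow> x \<notin> T \<Longrightarrow> lc a (insert x T) = smul (a x) x + lc a T"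
  by (simp add: lc_def smul_def fun_eq_iff)

lemma lc_cong: "(\<And>c. c \<in> S \<Longrightarrow> a c = b c) \<Longrightarrow> lc a S = lc b S"
  by (simp add: lc_def)

lemma exchange:
  assumes E: "is_basis (Fmod r n) E" and e: "e \<in> E" and h: "h \<in> Fmod r n"
    and he: "coord E h e = Poly_Mapping.single 0 \<kappa>" and k: "\<kappa> \<noteq> 0"
  shows "h \<notin> E - {e}" and "is_basis (Fmod r n) (insert h (E - {e}))"
proof -
  let ?p = "coord E h"
  define \<iota> :: "('a, 'b) pring" where "\<iota> = Poly_Mapping.single 0 (inverse \<kappa>)"
  have ip: "\<iota> * ?p e = 1" using k by (simp add: \<iota>_def he mult_single)
  show hn: "h \<notin> E - {e}"
  proof
    assume "h \<in> E - {e}"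
    then have "?p e = 0" using coord_basis[OF E, of h] by auto
    then show False using he k by (metis lookup_single_eq lookup_zero)
  qed
  let ?E' = "insert h (E - {e})"
  have EF: "E \<subseteq> Fmod r n" using E by (simp add: is_basis_def)
  have pfin: "finite {c. ?p c \<noteq> 0}" by (rule coord_fin[OF E h])
  have pE: "{c. ?p c \<noteq> 0} \<subseteq> E" using coord_out[OF E h] by blast
  \<comment> \<open>T maps E'-coordinates to E-coordinates\<close>
  define T where "T b = (\<lambda>x. if x = e then b h * ?p e else if x \<in> E - {e} then b x + b h * ?p x else 0)" for b
  have Tcoord: "is_coord E v (T b)" if b: "is_coord ?E' v b" for v b
  proof -
    let ?S = "({c. b c \<noteq> 0} - {h}) \<union> {c. ?p c \<noteq> 0} \<union> {e}"
    have bfin: "finite {c. b c \<noteq> 0}" using is_coord_fin[OF b] .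
    have Sfin: "finite ?S" using bfin pfin by simp
    have bE: "{c. b c \<noteq> 0} \<subseteq> ?E'" using is_coord_out[OF b] by blast
    have SE: "?S \<subseteq> E" using bE pE e by blast
    have hS: "h \<notin> ?S - {e}" using hn SE by blast
    have v1: "v = lc b (insert h (?S - {e}))"
      by (rule is_coord_lc[OF b]) (use Sfin bE in auto)
    also have "\<dots> = smul (b h) h + lc b (?S - {e})" by (rule lc_insert) (use Sfin hS in auto)
    finally have v2: "v = smul (b h) h + lc b (?S - {e})" .
    have h1: "h = lc ?p ?S" by (rule coord_lc[OF E h Sfin]) auto
    also have "\<dots> = lc ?p (insert e (?S - {e}))" by (simp add: insert_absorb)
    also have "\<dots> = smul (?p e) e + lc ?p (?S - {e})" by (rule lc_insert) (use Sfin in auto)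
    finally have h2: "h = smul (?p e) e + lc ?p (?S - {e})" .
    have t1: "lc (T b) ?S = smul (T b e) e + lc (T b) (?S - {e})"
    proof -
      have "lc (T b) ?S = lc (T b) (insert e (?S - {e}))" by (simp add: insert_absorb)
      also have "\<dots> = smul (T b e) e + lc (T b) (?S - {e})" by (rule lc_insert) (use Sfin in auto)
      finally show ?thesis .
    qed
    have t2: "lc (T b) (?S - {e}) = lc b (?S - {e}) + smul (b h) (lc ?p (?S - {e}))"
    proof -
      have "lc (T b) (?S - {e}) = lc (\<lambda>x. b x + b h * ?p x) (?S - {e})"
        by (rule lc_cong) (use SE hS in \<open>auto simp: T_def\<close>)
      also have "\<dots> = lc b (?S - {e}) + lc (\<lambda>x. b h * ?p x) (?S - {e})" by (rule lc_add[symmetric])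
      also have "lc (\<lambda>x. b h * ?p x) (?S - {e}) = smul (b h) (lc ?p (?S - {e}))" by (rule lc_smul[symmetric])
      finally show ?thesis .
    qed
    have Te: "T b e = b h * ?p e" by (simp add: T_def)
    have hh: "smul (b h) h = smul (b h) (smul (?p e) e + lc ?p (?S - {e}))"
      using h2 by (rule arg_cong[where f="smul (b h)"])
    have vexp: "v = smul (b h) (smul (?p e) e + lc ?p (?S - {e})) + lc b (?S - {e})"
      by (simp only: v2 hh)
    have "smul (b h) (smul (?p e) e + lc ?p (?S - {e})) + lc b (?S - {e}) =
          smul (b h * ?p e) e + (lc b (?S - {e}) + smul (b h) (lc ?p (?S - {e})))"
      by (simp add: smul_def fun_eq_iff algebra_simps)
    also have "\<dots> = lc (T b) ?S" by (simp only: t1 t2 Te)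
    finally have "v = lc (T b) ?S" using vexp by simp
    moreover have "{c. T b c \<noteq> 0} \<subseteq> ?S" using hn by (auto simp: T_def)
    ultimately show ?thesis using Sfin by (intro is_coordI[of _ _ ?S]) (use hn e in \<open>auto simp: T_def\<close>)
  qed
  have uniq: "b = a'" if b: "is_coord ?E' v b" and b': "is_coord ?E' v a'" and v: "v \<in> Fmod r n" for v b a'
  proof -
    have "T b = T a'" using coord_eq[OF E v Tcoord[OF b]] coord_eq[OF E v Tcoord[OF b']] by simp
    then have eq: "\<And>x. T b x = T a' x" by simp
    have 1: "b h = a' h"
    proof -
      have "b h * ?p e = a' h * ?p e" using eq[of e] by (simp add: T_def)
      then have "\<iota> * (b h * ?p e) = \<iota> * (a' h * ?p e)" by simp
      moreover have "\<And>x. \<iota> * (x * ?p e) = x" using ip by (metis mult.commute mult.left_commute mult_1)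
      ultimately show ?thesis by metis
    qed
    show ?thesis
    proof
      fix x
      show "b x = a' x"
      proof (cases "x \<in> ?E'")
        case True
        show ?thesis
        proof (cases "x = h")
          case False
          then have "x \<in> E - {e}" using True by blast
          then show ?thesis using eq[of x] 1 by (auto simp: T_def)
        qed (use 1 in simp)
      next
        case False
        then show ?thesis using is_coord_out[OF b] is_coord_out[OF b'] by simp
      qed
    qed
  qed
  have ex: "\<exists>b. is_coord ?E' v b" if v: "v \<in> Fmod r n" for v
  proof -
    let ?a = "coord E v"
    define a' where "a' x = (if x = h then \<iota> * ?a e else if x \<in> E - {e} then ?a x - \<iota> * ?a e * ?p x else 0)" for x
    let ?S = "{c. ?a c \<noteq> 0} \<union> {c. ?p c \<noteq> 0} \<union> {e}"
    have Sfin: "finite ?S" using pfin coord_fin[OF E v] by simp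
    have SE: "?S \<subseteq> E" using pE e coord_out[OF E v] by blast
    have hS: "h \<notin> ?S - {e}" using hn SE by blast
    have v2: "v = smul (?a e) e + lc ?a (?S - {e})"
    proof -
      have "v = lc ?a ?S" by (rule coord_lc[OF E v Sfin]) auto
      also have "\<dots> = lc ?a (insert e (?S - {e}))" by (simp add: insert_absorb)
      also have "\<dots> = smul (?a e) e + lc ?a (?S - {e})" by (rule lc_insert) (use Sfin in auto)
      finally show ?thesis .
    qed
    have h2: "h = smul (?p e) e + lc ?p (?S - {e})"
    proof -
      have "h = lc ?p ?S" by (rule coord_lc[OF E h Sfin]) auto
      also have "\<dots> = lc ?p (insert e (?S - {e}))" by (simp add: insert_absorb)
      also have "\<dots> = smul (?p e) e + lc ?p (?S - {e})" by (rule lc_insert) (use Sfin in auto)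
      finally show ?thesis .
    qed
    have t1: "lc a' (insert h (?S - {e})) = smul (a' h) h + lc a' (?S - {e})"
      by (rule lc_insert) (use Sfin hS in auto)
    have t2: "lc a' (?S - {e}) = lc ?a (?S - {e}) - smul (\<iota> * ?a e) (lc ?p (?S - {e}))"
    proof -
      have "lc a' (?S - {e}) = lc (\<lambda>x. ?a x - (\<iota> * ?a e) * ?p x) (?S - {e})"
        by (rule lc_cong) (use SE hS in \<open>auto simp: a'_def\<close>)
      also have "\<dots> = lc ?a (?S - {e}) - lc (\<lambda>x. (\<iota> * ?a e) * ?p x) (?S - {e})" by (rule lc_diff[symmetric])
      also have "lc (\<lambda>x. (\<iota> * ?a e) * ?p x) (?S - {e}) = smul (\<iota> * ?a e) (lc ?p (?S - {e}))" by (rule lc_smul[symmetric])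
      finally show ?thesis .
    qed
    have ah: "a' h = \<iota> * ?a e" by (simp add: a'_def)
    have hh: "smul (\<iota> * ?a e) h = smul (\<iota> * ?a e) (smul (?p e) e + lc ?p (?S - {e}))"
      using h2 by (rule arg_cong[where f="smul (\<iota> * ?a e)"])
    have ip': "\<And>x. \<iota> * ?a e * (?p e * x) = ?a e * x"
    proof -
      fix x have "\<iota> * ?a e * (?p e * x) = (\<iota> * ?p e) * (?a e * x)" by (simp add: algebra_simps)
      then show "\<iota> * ?a e * (?p e * x) = ?a e * x" using ip by simp
    qed
    have ip'': "\<And>x y. \<iota> * (x * (?p e * y)) = x * y"
    proof -
      fix x y have "\<iota> * (x * (?p e * y)) = x * y * (\<iota> * ?p e)" by (simp add: algebra_simps)
      then show "\<iota> * (x * (?p e * y)) = x * y" using ip by simp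
    qed
    have "lc a' (insert h (?S - {e})) = smul (\<iota> * ?a e) (smul (?p e) e + lc ?p (?S - {e})) +
           (lc ?a (?S - {e}) - smul (\<iota> * ?a e) (lc ?p (?S - {e})))"
      by (simp only: t1 t2 ah hh)
    also have "\<dots> = smul (?a e) e + lc ?a (?S - {e})"
    proof -
      have "smul (\<iota> * ?a e) (smul (?p e) e + lc ?p (?S - {e})) = smul (?a e) e + smul (\<iota> * ?a e) (lc ?p (?S - {e}))"
        by (simp add: smul_def fun_eq_iff distrib_left ip')
      then show ?thesis by (simp add: fun_eq_iff)
    qed
    finally have "v = lc a' (insert h (?S - {e}))" using v2 by simp
    moreover have "{c. a' c \<noteq> 0} \<subseteq> insert h (?S - {e})" by (auto simp: a'_def)
    ultimately have "is_coord ?E' v a'" using Sfin by (intro is_coordI[of _ _ "insert h (?S - {e})"]) (auto simp: a'_def)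
    then show ?thesis by blast
  qed
  show "is_basis (Fmod r n) ?E'"
    unfolding is_basis_def using EF h e ex uniq by blast
qed




lemma hp_mult: "hp d p \<Longrightarrow> hp e q \<Longrightarrow> hp (d + e) (p * (q::('v::finite, 'k::field) pring))"
  using keys_mult[of p q] by (auto simp: hp_def mdeg_add)

lemma homog_smul:
  fixes deg :: "nat \<Rightarrow> nat \<Rightarrow> ('v::finite \<Rightarrow> int)"
  assumes h: "homog_of r deg n a v" and s: "hp e s"
  shows "homog_of r deg n (a + e) (smul s v)"
  unfolding homog_of_iff
proof
  show "smul s v \<in> Fmod r n" using h by (simp add: Fmod_smul homog_of_Fmod)
  show "\<forall>j<r n. hp (a + e - deg n j) (smul s v j)"
  proof (intro allI impI)
    fix j assume j: "j < r n"
    have "hp (a - deg n j) (v j)" using h j by (simp add: homog_of_iff)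
    then have "hp (e + (a - deg n j)) (s * v j)" by (rule hp_mult[OF s])
    moreover have "e + (a - deg n j) = a + e - deg n j" by (simp add: fun_eq_iff)
    ultimately show "hp (a + e - deg n j) (smul s v j)" by (simp add: smul_def)
  qed
qed

lemma homog_diff:
  fixes deg :: "nat \<Rightarrow> nat \<Rightarrow> ('v::finite \<Rightarrow> int)"
  assumes "homog_of r deg n a v" "homog_of r deg n a w" shows "homog_of r deg n a (v - w)"
proof -
  from assms have "v \<in> Fmod r n \<and> vproj r deg n a v = v" "w \<in> Fmod r n \<and> vproj r deg n a w = w"
    by (simp_all only: homog_of_vproj_iff)
  then show ?thesis by (simp only: homog_of_vproj_iff) (auto simp: vproj_diff Fmod_diff)
qed

lemma single_eq0_iff: "Poly_Mapping.single k x = 0 \<longleftrightarrow> x = 0"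
  by (metis lookup_single_eq single_zero)

lemma single_ne0: "b \<noteq> 0 \<Longrightarrow> Poly_Mapping.single mu b \<noteq> 0"
  by (metis lookup_single_eq lookup_zero)

lemma single_mult_ne0: "b \<noteq> 0 \<Longrightarrow> p \<noteq> 0 \<Longrightarrow> Poly_Mapping.single mu b * (p::('v, 'k::field) pring) \<noteq> 0"
  using single_mult_eq_0 by blast

lemma hp_nonneg: "hp d (p::('v::finite, 'k::field) pring) \<Longrightarrow> p \<noteq> 0 \<Longrightarrow> nonneg d"
  using conjunct2[OF hp_cases[of d p]] by (rule mp)

lemma hp_form: "hp d (p::('v::finite, 'k::field) pring) \<Longrightarrow> p = Poly_Mapping.single (mmon d) (Poly_Mapping.lookup p (mmon d))"
  by (rule conjunct1[OF hp_cases])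

lemma supp_iff: "c \<in> supp B v \<longleftrightarrow> c \<in> B \<and> coord B v c \<noteq> 0"
  by (simp add: supp_def)

context mres begin

lemma shift:
  fixes y z :: "nat \<Rightarrow> ('v, 'k) pring"
  assumes B: "is_basis (Fmod r m) B" and H: "\<forall>c\<in>B. homog r deg m c"
    and yK: "y \<in> K m" and ya: "homog_of r deg m a y" and zK: "z \<in> K m" and z0: "z \<noteq> 0"
    and sz: "supp B z \<subset> supp B y"
  shows "\<exists>z'. z' \<in> K m \<and> homog_of r deg m a z' \<and> supp B z' \<subset> supp B y \<and> supp B z' \<noteq> {}"
proof -
  let ?dg = "dgf r deg m"
  have yF: "y \<in> Fmod r m" and zF: "z \<in> Fmod r m" using yK zK K_Fmod by auto
  obtain j where j: "z j \<noteq> 0" using z0 by (auto simp: fun_eq_iff)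
  then have jr: "j < r m" using zF by (metis Fmod_iff not_le)
  obtain mu where mu: "mu \<in> Poly_Mapping.keys (z j)" using j by (metis all_not_in_conv keys_eq_empty)
  define a' where "a' = mdeg mu + deg m j"
  define w where "w = vproj r deg m a' z"
  have wK: "w \<in> K m" unfolding w_def by (rule K_vproj[OF zK])
  have wa: "homog_of r deg m a' w" unfolding w_def by (rule homog_of_vproj)
  have wF: "w \<in> Fmod r m" by (simp add: w_def)
  have "w j \<noteq> 0"
  proof -
    have "w j = pproj (mdeg mu) (z j)" using jr by (simp add: w_def vproj_def a'_def)
    then have "Poly_Mapping.lookup (w j) mu = Poly_Mapping.lookup (z j) mu"
      by (simp add: pproj_def nonneg_mdeg mono_mdeg)
    then show ?thesis using mu by (metis in_keys_iff lookup_zero)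
  qed
  then have w0: "w \<noteq> 0" by auto
  have cw: "coord B w c = pproj (a' - ?dg c) (coord B z c)" for c
    using coord_vproj[OF B H zF] by (simp add: w_def)
  have swz: "supp B w \<subseteq> supp B z" by (auto simp: supp_def cw)
  have swy: "supp B w \<subseteq> supp B y" using swz sz by blast
  have "supp B w \<noteq> {}" using supp_empty[OF B wF] w0 by blast
  then obtain b where bw: "b \<in> supp B w" by blast
  then have bB: "b \<in> B" and byy: "b \<in> supp B y" using swy by (auto simp: supp_def)
  obtain c0 where c0y: "c0 \<in> supp B y" and c0z: "c0 \<notin> supp B z" using sz by blast
  have hy: "\<And>c. hp (a - ?dg c) (coord B y c)" using coord_homog[OF B H ya] .
  have hw: "\<And>c. hp (a' - ?dg c) (coord B w c)" using coord_homog[OF B H wa] .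
  define \<alpha> where "\<alpha> = Poly_Mapping.lookup (coord B y b) (mmon (a - ?dg b))"
  define \<beta> where "\<beta> = Poly_Mapping.lookup (coord B w b) (mmon (a' - ?dg b))"
  have ybf: "coord B y b = Poly_Mapping.single (mmon (a - ?dg b)) \<alpha>" using hp_form[OF hy] \<alpha>_def by blast
  have wbf: "coord B w b = Poly_Mapping.single (mmon (a' - ?dg b)) \<beta>" using hp_form[OF hw] \<beta>_def by blast
  have yb0: "coord B y b \<noteq> 0" using byy by (simp add: supp_def)
  have wb0: "coord B w b \<noteq> 0" using bw by (simp add: supp_def)
  have nya: "nonneg (a - ?dg b)" using hp_nonneg[OF hy yb0] .
  have nwa: "nonneg (a' - ?dg b)" using hp_nonneg[OF hw wb0] .
  have a0: "\<alpha> \<noteq> 0" using yb0 ybf by auto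
  have b0: "\<beta> \<noteq> 0" using wb0 wbf by auto
  define D where "D = (\<lambda>i. max (a i) (a' i))"
  have nDa: "nonneg (D - a)" and nDa': "nonneg (D - a')" by (auto simp: nonneg_def D_def)
  define s1 where "s1 = Poly_Mapping.single (mmon (D - a)) \<beta>"
  define s2 where "s2 = Poly_Mapping.single (mmon (D - a')) \<alpha>"
  define z'' where "z'' = smul s1 y - smul s2 w"
  have z''K: "z'' \<in> K m" unfolding z''_def by (intro K_diff K_smul yK wK)
  have z''F: "z'' \<in> Fmod r m" using z''K K_Fmod by blast
  have z''D: "homog_of r deg m D z''"
  proof -
    have e1: "a + (D - a) = D" and e2: "a' + (D - a') = D" by (simp_all add: fun_eq_iff)
    have h1: "homog_of r deg m (a + (D - a)) (smul s1 y)"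
      unfolding s1_def by (rule homog_smul[OF ya hp_single[OF nDa]])
    have h2: "homog_of r deg m (a' + (D - a')) (smul s2 w)"
      unfolding s2_def by (rule homog_smul[OF wa hp_single[OF nDa']])
    have "homog_of r deg m D (smul s1 y)" using h1 unfolding e1 .
    moreover have "homog_of r deg m D (smul s2 w)" using h2 unfolding e2 .
    ultimately show ?thesis unfolding z''_def by (rule homog_diff)
  qed
  have cz'': "coord B z'' c = s1 * coord B y c - s2 * coord B w c" for c
    unfolding z''_def using coord_diff[OF B Fmod_smul[OF yF] Fmod_smul[OF wF]] coord_smul[OF B yF] coord_smul[OF B wF]
    by simp
  have "coord B z'' b = 0"
  proof -
    have q1: "D - a + (a - ?dg b) = D - ?dg b" and q2: "D - a' + (a' - ?dg b) = D - ?dg b"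
      by (simp_all add: fun_eq_iff)
    have e1: "mmon (D - a) + mmon (a - ?dg b) = mmon (D - ?dg b)" using mono_add[OF nDa nya] unfolding q1 .
    have e2: "mmon (D - a') + mmon (a' - ?dg b) = mmon (D - ?dg b)" using mono_add[OF nDa' nwa] unfolding q2 .
    have "coord B z'' b = s1 * coord B y b - s2 * coord B w b" by (rule cz'')
    also have "\<dots> = Poly_Mapping.single (mmon (D - ?dg b)) (\<beta> * \<alpha>) - Poly_Mapping.single (mmon (D - ?dg b)) (\<alpha> * \<beta>)"
      unfolding ybf wbf s1_def s2_def mult_single e1 e2 ..
    also have "\<dots> = 0" by (simp add: mult.commute)
    finally show ?thesis .
  qed
  then have bz'': "b \<notin> supp B z''" by (simp add: supp_def)
  have z''y: "supp B z'' \<subseteq> supp B y"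
  proof
    fix c assume c: "c \<in> supp B z''"
    show "c \<in> supp B y"
    proof (rule ccontr)
      assume "c \<notin> supp B y"
      then have "coord B y c = 0" "coord B w c = 0" using swy c by (auto simp: supp_def)
      then show False using c cz'' by (simp add: supp_def)
    qed
  qed
  have c0z'': "c0 \<in> supp B z''"
  proof -
    have "coord B w c0 = 0" using swz c0z c0y by (auto simp: supp_def)
    moreover have "coord B y c0 \<noteq> 0" using c0y by (simp add: supp_def)
    ultimately have "coord B z'' c0 \<noteq> 0" using cz'' single_mult_ne0[OF b0] s1_def by simp
    then show ?thesis using c0y by (simp add: supp_def)
  qed
  \<comment> \<open>descend to degree a\<close>
  let ?S = "supp B y"
  have Sfin: "finite ?S" by (rule supp_finite[OF B yF])
  have SB: "?S \<subseteq> B" by (auto simp: supp_def)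
  have BF: "B \<subseteq> Fmod r m" using B by (simp add: is_basis_def)
  have nS: "\<And>c. c \<in> ?S \<Longrightarrow> nonneg (a - ?dg c)" using hy hp_nonneg by (auto simp: supp_def)
  define co where "co c = (if c \<in> ?S then Poly_Mapping.single (mmon (a - ?dg c))
        (Poly_Mapping.lookup (coord B z'' c) (mmon (D - ?dg c))) else 0)" for c
  define z' where "z' = lc co ?S"
  have z'F: "z' \<in> Fmod r m" unfolding z'_def using SB BF by (intro lc_Fmod) auto
  have co_is: "is_coord B z' co"
    by (rule is_coordI[OF _ Sfin]) (use SB in \<open>auto simp: co_def z'_def\<close>)
  have cz': "coord B z' = co" by (rule coord_eq[OF B z'F co_is])
  have hz'': "\<And>c. hp (D - ?dg c) (coord B z'' c)" using coord_homog[OF B H z''D] .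
  have co_nz: "co c \<noteq> 0 \<longleftrightarrow> c \<in> ?S \<and> coord B z'' c \<noteq> 0" for c
  proof -
    have "coord B z'' c = Poly_Mapping.single (mmon (D - ?dg c)) (Poly_Mapping.lookup (coord B z'' c) (mmon (D - ?dg c)))"
      using hp_form[OF hz''] by blast
    then have "coord B z'' c \<noteq> 0 \<longleftrightarrow> Poly_Mapping.lookup (coord B z'' c) (mmon (D - ?dg c)) \<noteq> 0"
      by (metis single_eq0_iff)
    then show ?thesis unfolding co_def by (simp add: single_eq0_iff)
  qed
  have sz': "supp B z' = supp B z''"
    using z''y co_nz by (auto simp: supp_def cz')
  have z'K: "z' \<in> K m"
  proof (rule K_sat[OF z'F, of 1 "mmon (D - a)"])
    have "smul (Poly_Mapping.single (mmon (D - a)) 1) z' = lc (\<lambda>c. Poly_Mapping.single (mmon (D - a)) 1 * co c) ?S"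
      unfolding z'_def by (rule lc_smul)
    also have "\<dots> = lc (coord B z'') ?S"
    proof (rule lc_cong)
      fix c assume c: "c \<in> ?S"
      have e: "mmon (D - a) + mmon (a - ?dg c) = mmon (D - ?dg c)" using mono_add[OF nDa nS[OF c]] by simp
      define l where "l = Poly_Mapping.lookup (coord B z'' c) (mmon (D - ?dg c))"
      have q: "coord B z'' c = Poly_Mapping.single (mmon (D - ?dg c)) l"
        using hp_form[OF hz''] l_def by blast
      have "Poly_Mapping.single (mmon (D - a)) 1 * co c = Poly_Mapping.single (mmon (D - a)) 1 * Poly_Mapping.single (mmon (a - ?dg c)) l"
        using c by (simp add: co_def l_def)
      also have "\<dots> = Poly_Mapping.single (mmon (D - ?dg c)) l" by (simp add: mult_single e)
      finally show "Poly_Mapping.single (mmon (D - a)) 1 * co c = coord B z'' c" using q by simp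
    qed
    also have "\<dots> = z''"
      by (rule coord_lc[OF B z''F Sfin, symmetric]) (use z''y coord_out[OF B z''F] in \<open>auto simp: supp_def\<close>)
    finally show "smul (Poly_Mapping.single (mmon (D - a)) 1) z' \<in> K m" using z''K by simp
  qed simp
  have z'a: "homog_of r deg m a z'"
  proof (rule homog_by_coord[OF B H z'F])
    fix c assume "c \<in> B"
    show "hp (a - ?dg c) (coord B z' c)"
      unfolding cz' co_def using nS hp_single by auto
  qed
  show ?thesis
  proof (intro exI conjI)
    show "z' \<in> K m" "homog_of r deg m a z'" by (fact z'K, fact z'a)
    show "supp B z' \<subset> supp B y" using sz' z''y bz'' byy by blast
    show "supp B z' \<noteq> {}" using sz' c0z'' by blast
  qed
qed

end



lemma mmon_zero: "mmon (0::'v::finite \<Rightarrow> int) = 0"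
  by (rule poly_mapping_eqI) (simp add: lookup_mono)

lemma nonneg_zero: "nonneg (0::'v \<Rightarrow> int)"
  by (simp add: nonneg_def)

lemma hp_const: "hp (0::'v::finite \<Rightarrow> int) (Poly_Mapping.single 0 c)"
  using hp_single[OF nonneg_zero, of c] by (simp add: mmon_zero)

lemma std_basis: "is_basis (Fmod r n) (ev ` {..<r n} :: (nat \<Rightarrow> ('v, 'k::field) pring) set)"
proof -
  let ?S = "ev ` {..<r n} :: (nat \<Rightarrow> ('v, 'k) pring) set"
  have evj: "(ev j :: nat \<Rightarrow> ('v, 'k) pring) k = (if k = j then 1 else 0)" for j k by (simp add: ev_def)
  have inj: "inj_on (ev :: nat \<Rightarrow> nat \<Rightarrow> ('v, 'k) pring) {..<r n}"
    by (rule inj_onI) (metis evj one_neq_zero)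
  have lcS: "lc a ?S k = (if k < r n then a (ev k) else 0)" for a k
  proof -
    have "lc a ?S k = (\<Sum>j<r n. a (ev j) * ev j k)"
      unfolding lc_def by (simp add: sum.reindex[OF inj])
    also have "\<dots> = (\<Sum>j<r n. if j = k then a (ev j) else 0)"
      by (rule sum.cong) (auto simp: evj)
    also have "\<dots> = (if k < r n then a (ev k) else 0)" by simp
    finally show ?thesis .
  qed
  show ?thesis unfolding is_basis_def
  proof (intro conjI ballI)
    show "?S \<subseteq> Fmod r n" by (auto simp: Fmod_def ev_def)
    fix v :: "nat \<Rightarrow> ('v, 'k) pring" assume v: "v \<in> Fmod r n"
    define a where "a c = (if c \<in> ?S then v (inv_into {..<r n} ev c) else 0)" for c
    have aev: "a (ev j) = v j" if "j < r n" for j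
      using that inv_into_f_f[OF inj, of j] by (simp add: a_def)
    have isc: "is_coord ?S v a"
    proof (rule is_coordI[of _ _ ?S])
      show "v = lc a ?S" using v by (auto simp: fun_eq_iff lcS aev Fmod_def)
    qed (auto simp: a_def)
    show "\<exists>!a. is_coord ?S v a"
    proof (rule ex1I[of _ a])
      show "is_coord ?S v a" by (fact isc)
      fix a' assume a': "is_coord ?S v a'"
      have "v = lc a' ?S" by (rule is_coord_lc[OF a']) (use is_coord_out[OF a'] in auto)
      then have "a' (ev j) = v j" if "j < r n" for j using that by (simp add: lcS)
      then have a'ev: "\<And>j. j < r n \<Longrightarrow> a' (ev j) = v j" by blast
      show "a' = a"
      proof
        fix c show "a' c = a c"
        proof (cases "c \<in> ?S")
          case True
          then obtain j where "j < r n" "c = ev j" by auto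
          then show ?thesis using a'ev aev by simp
        next
          case False
          then show ?thesis using is_coord_out[OF a'] by (simp add: a_def)
        qed
      qed
    qed
  qed
qed

lemma std_homog: "\<forall>e\<in>ev ` {..<r n}. homog r deg n (e :: nat \<Rightarrow> ('v::finite, 'k::field) pring)"
proof
  fix e :: "nat \<Rightarrow> ('v, 'k) pring" assume "e \<in> ev ` {..<r n}"
  then obtain j where j: "j < r n" "e = ev j" by auto
  have "homog_of r deg n (deg n j) (ev j :: nat \<Rightarrow> ('v, 'k) pring)" using j(1) by (rule ev_homog)
  then show "homog r deg n e" using j(2) unfolding homog_def by blast
qed

context mres begin

definition minc :: "nat \<Rightarrow> (nat \<Rightarrow> ('v, 'k) pring) set \<Rightarrow> (nat \<Rightarrow> ('v, 'k) pring) \<Rightarrow> bool" where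
  "minc m B y \<longleftrightarrow> y \<in> K m \<and> \<not> (\<exists>z\<in>K m. z \<noteq> 0 \<and> supp B z \<subset> supp B y)"

lemma improve:
  assumes B: "is_basis (Fmod r m) B" and H: "\<forall>c\<in>B. homog r deg m c"
    and E: "is_basis (Fmod r (Suc m)) E" and HE: "\<forall>e\<in>E. homog r deg (Suc m) e"
    and e: "e \<in> E" and nm: "\<not> minc m B (dif r A (Suc m) e)"
  shows "\<exists>e'. e' \<notin> E - {e} \<and> is_basis (Fmod r (Suc m)) (insert e' (E - {e})) \<and>
     homog r deg (Suc m) e' \<and> supp B (dif r A (Suc m) e') \<subset> supp B (dif r A (Suc m) e)"
proof -
  let ?f = "dif r A (Suc m)"
  let ?dg = "dgf r deg m"
  define y where "y = ?f e"
  define a where "a = dgf r deg (Suc m) e"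
  have EF: "E \<subseteq> Fmod r (Suc m)" using E by (simp add: is_basis_def)
  have eF: "e \<in> Fmod r (Suc m)" using e EF by blast
  have ea: "homog_of r deg (Suc m) a e" unfolding a_def using HE e dgf by blast
  have ya: "homog_of r deg m a y" unfolding y_def by (rule dif_homog[OF ea])
  have yK: "y \<in> K m" unfolding y_def K_def using eF by blast
  have yF: "y \<in> Fmod r m" using yK K_Fmod by blast
  obtain z where zK: "z \<in> K m" and z0: "z \<noteq> 0" and sz: "supp B z \<subset> supp B y"
    using nm yK unfolding minc_def y_def by blast
  obtain z' where z'K: "z' \<in> K m" and z'a: "homog_of r deg m a z'" and sz': "supp B z' \<subset> supp B y"
      and sz'0: "supp B z' \<noteq> {}"
    using shift[OF B H yK ya zK z0 sz] by blast
  have z'F: "z' \<in> Fmod r m" using z'K K_Fmod by blast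
  obtain u where uF: "u \<in> Fmod r (Suc m)" and zu: "z' = ?f u" using z'K unfolding K_def by blast
  define h where "h = vproj r deg (Suc m) a u"
  have hF: "h \<in> Fmod r (Suc m)" by (simp add: h_def)
  have ha: "homog_of r deg (Suc m) a h" unfolding h_def by (rule homog_of_vproj)
  have fh: "?f h = z'"
  proof -
    have "?f h = vproj r deg m a z'" unfolding h_def zu by (rule dif_vproj)
    also have "\<dots> = z'" using z'a homog_of_vproj_iff by blast
    finally show ?thesis .
  qed
  define \<kappa> where "\<kappa> = Poly_Mapping.lookup (coord E h e) (mmon 0)"
  have "hp (a - dgf r deg (Suc m) e) (coord E h e)" using coord_homog[OF E HE ha] .
  then have "hp 0 (coord E h e)" by (simp add: a_def)
  then have he: "coord E h e = Poly_Mapping.single 0 \<kappa>"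
    using hp_form[of 0 "coord E h e"] by (simp add: \<kappa>_def mmon_zero)
  obtain b where bz': "b \<in> supp B z'" using sz'0 by blast
  have bB: "b \<in> B" using bz' by (simp add: supp_def)
  define M where "M = mmon (a - ?dg b)"
  define \<alpha> where "\<alpha> = Poly_Mapping.lookup (coord B y b) M"
  define \<beta> where "\<beta> = Poly_Mapping.lookup (coord B z' b) M"
  have yb: "coord B y b = Poly_Mapping.single M \<alpha>"
    using hp_form[OF coord_homog[OF B H ya, of b]] by (simp add: \<alpha>_def M_def)
  have zb: "coord B z' b = Poly_Mapping.single M \<beta>"
    using hp_form[OF coord_homog[OF B H z'a, of b]] by (simp add: \<beta>_def M_def)
  have b0: "\<beta> \<noteq> 0" using bz' zb by (auto simp: supp_def)
  have z'y: "supp B z' \<subseteq> supp B y" using sz' by blast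
  show ?thesis
  proof (cases "\<kappa> * (\<alpha> / \<beta>) = 1")
    case True
    then have k0: "\<kappa> \<noteq> 0" by auto
    show ?thesis
    proof (intro exI conjI)
      show "h \<notin> E - {e}" by (rule exchange(1)[OF E e hF he k0])
      show "is_basis (Fmod r (Suc m)) (insert h (E - {e}))" by (rule exchange(2)[OF E e hF he k0])
      show "homog r deg (Suc m) h" using ha by (auto simp: homog_def)
      show "supp B (?f h) \<subset> supp B (?f e)" using sz' fh y_def by simp
    qed
  next
    case False
    define lam where "lam = Poly_Mapping.single (0::'v \<Rightarrow>\<^sub>0 nat) (\<alpha> / \<beta>)"
    define e' where "e' = e - smul lam h"
    have e'F: "e' \<in> Fmod r (Suc m)" unfolding e'_def by (intro Fmod_diff Fmod_smul eF hF)
    have ce': "coord E e' e = Poly_Mapping.single 0 (1 - \<alpha> / \<beta> * \<kappa>)"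
    proof -
      have "coord E e' e = coord E e e - lam * coord E h e"
        unfolding e'_def using coord_diff[OF E eF Fmod_smul[OF hF]] coord_smul[OF E hF] by simp
      also have "\<dots> = Poly_Mapping.single 0 1 - Poly_Mapping.single 0 (\<alpha> / \<beta> * \<kappa>)"
        by (simp add: coord_basis[OF E e] he lam_def mult_single)
      also have "\<dots> = Poly_Mapping.single 0 (1 - \<alpha> / \<beta> * \<kappa>)" by (simp add: single_diff)
      finally show ?thesis .
    qed
    have k1: "1 - \<alpha> / \<beta> * \<kappa> \<noteq> 0" using False by (simp add: mult.commute)
    have e'a: "homog_of r deg (Suc m) a e'"
    proof -
      have "homog_of r deg (Suc m) (a + 0) (smul lam h)"
        unfolding lam_def by (rule homog_smul[OF ha hp_const])
      then show ?thesis unfolding e'_def by (intro homog_diff[OF ea]) simp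
    qed
    have fe': "?f e' = y - smul lam z'"
      unfolding e'_def y_def by (simp add: dif_diff dif_smul fh)
    have cfe': "coord B (?f e') c = coord B y c - lam * coord B z' c" for c
      unfolding fe' using coord_diff[OF B yF Fmod_smul[OF z'F]] coord_smul[OF B z'F] by simp
    have "coord B (?f e') b = 0"
    proof -
      have "lam * coord B z' b = Poly_Mapping.single M (\<alpha> / \<beta> * \<beta>)"
        by (simp add: lam_def zb mult_single)
      also have "\<dots> = coord B y b" using b0 yb by simp
      finally show ?thesis by (simp add: cfe')
    qed
    then have bn: "b \<notin> supp B (?f e')" by (simp add: supp_def)
    have sub: "supp B (?f e') \<subseteq> supp B y"
    proof
      fix c assume c: "c \<in> supp B (?f e')"
      show "c \<in> supp B y"
      proof (rule ccontr)
        assume "c \<notin> supp B y"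
        then have "coord B y c = 0" "coord B z' c = 0" using z'y c by (auto simp: supp_def)
        then show False using c cfe' by (simp add: supp_def)
      qed
    qed
    have by': "b \<in> supp B y" using bz' z'y by blast
    show ?thesis
    proof (intro exI conjI)
      show "e' \<notin> E - {e}" by (rule exchange(1)[OF E e e'F ce' k1])
      show "is_basis (Fmod r (Suc m)) (insert e' (E - {e}))" by (rule exchange(2)[OF E e e'F ce' k1])
      show "homog r deg (Suc m) e'" using e'a by (auto simp: homog_def)
      show "supp B (?f e') \<subset> supp B (?f e)" using sub bn by' y_def by blast
    qed
  qed
qed

end



context mres begin

lemma iterate:
  assumes B: "is_basis (Fmod r m) B" and H: "\<forall>c\<in>B. homog r deg m c"
  shows "finite E \<Longrightarrow> is_basis (Fmod r (Suc m)) E \<Longrightarrow> (\<forall>e\<in>E. homog r deg (Suc m) e) \<Longrightarrow>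
    (\<Sum>e\<in>E. card (supp B (dif r A (Suc m) e))) = N \<Longrightarrow>
    \<exists>E'. is_basis (Fmod r (Suc m)) E' \<and> (\<forall>e\<in>E'. homog r deg (Suc m) e) \<and>
         (\<forall>e\<in>E'. minc m B (dif r A (Suc m) e))"
proof (induction N arbitrary: E rule: less_induct)
  case (less N)
  let ?f = "dif r A (Suc m)"
  let ?mu = "\<lambda>E. (\<Sum>e\<in>E. card (supp B (?f e)))"
  show ?case
  proof (cases "\<forall>e\<in>E. minc m B (?f e)")
    case True
    then show ?thesis using less.prems by blast
  next
    case False
    then obtain e where e: "e \<in> E" and nm: "\<not> minc m B (?f e)" by blast
    obtain e' where e'n: "e' \<notin> E - {e}" and E': "is_basis (Fmod r (Suc m)) (insert e' (E - {e}))"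
      and he': "homog r deg (Suc m) e'" and ss: "supp B (?f e') \<subset> supp B (?f e)"
      using improve[OF B H less.prems(2) less.prems(3) e nm] by blast
    let ?E1 = "insert e' (E - {e})"
    have fin1: "finite ?E1" using less.prems(1) by simp
    have EF: "E \<subseteq> Fmod r (Suc m)" using less.prems(2) by (simp add: is_basis_def)
    have fe: "?f e \<in> Fmod r m" by (rule dif_Fmod)
    have lt: "card (supp B (?f e')) < card (supp B (?f e))"
      by (rule psubset_card_mono[OF supp_finite[OF B fe] ss])
    have "?mu ?E1 = card (supp B (?f e')) + ?mu (E - {e})"
      using less.prems(1) e'n by (simp add: sum.insert)
    also have "\<dots> < card (supp B (?f e)) + ?mu (E - {e})" using lt by simp
    also have "\<dots> = ?mu E" using less.prems(1) e by (simp add: sum.remove)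
    finally have "?mu ?E1 < N" using less.prems(4) by simp
    moreover have "\<forall>x\<in>?E1. homog r deg (Suc m) x" using less.prems(3) he' by blast
    ultimately show ?thesis using less.IH[OF _ fin1 E'] by blast
  qed
qed

lemma next_level:
  assumes B: "is_basis (Fmod r m) B" and H: "\<forall>c\<in>B. homog r deg m c"
  shows "\<exists>E'. is_basis (Fmod r (Suc m)) E' \<and> (\<forall>e\<in>E'. homog r deg (Suc m) e) \<and>
         (\<forall>e\<in>E'. minc m B (dif r A (Suc m) e))"
  using iterate[OF B H, of "ev ` {..<r (Suc m)}"] std_basis std_homog by blast

lemma minc_cycle:
  assumes "minc m (Bf m) y" shows "cycle_min_supp r A Bf m y"
  using assms unfolding minc_def cycle_min_supp_def kerf_K by blast

end

theorem main_aux: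
  fixes r :: "nat \<Rightarrow> nat"
    and deg :: "nat \<Rightarrow> nat \<Rightarrow> ('v::finite \<Rightarrow> int)"
    and A :: "nat \<Rightarrow> nat \<Rightarrow> nat \<Rightarrow> ('v, 'k::field) pring"
    and C :: "(nat \<Rightarrow> ('v, 'k) pring) set"
  assumes "min_graded_free_resolution r deg A"
    and "H0_torsion_free r A"
    and "is_basis (Fmod r 0) C"
    and "\<forall>c\<in>C. homog r deg 0 c"
  shows "\<exists>B. basis_min_supp r A B \<and> (\<forall>n. \<forall>b\<in>B n. homog r deg n b) \<and> B 0 = C"
proof -
  interpret mres r deg A using assms(1,2) by unfold_locales
  define good where "good m Bm E \<longleftrightarrow> is_basis (Fmod r (Suc m)) E \<and> (\<forall>e\<in>E. homog r deg (Suc m) e) \<and>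
         (\<forall>e\<in>E. minc m Bm (dif r A (Suc m) e))" for m Bm E
  define Bf where "Bf = rec_nat C (\<lambda>m Bm. SOME E. good m Bm E)"
  have B0: "Bf 0 = C" by (simp add: Bf_def)
  have BS: "Bf (Suc m) = (SOME E. good m (Bf m) E)" for m by (simp add: Bf_def)
  have P: "is_basis (Fmod r n) (Bf n) \<and> (\<forall>c\<in>Bf n. homog r deg n c)" for n
  proof (induction n)
    case 0 then show ?case using assms(3,4) B0 by simp
  next
    case (Suc m)
    have "\<exists>E. good m (Bf m) E" unfolding good_def using next_level Suc by blast
    then have "good m (Bf m) (Bf (Suc m))" unfolding BS by (rule someI_ex)
    then show ?case unfolding good_def by blast
  qed
  have G: "good m (Bf m) (Bf (Suc m))" for m
  proof -
    have "\<exists>E. good m (Bf m) E" unfolding good_def using next_level P by blast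
    then show ?thesis unfolding BS by (rule someI_ex)
  qed
  show ?thesis
  proof (intro exI conjI)
    show "basis_min_supp r A Bf" unfolding basis_min_supp_def
    proof (intro conjI allI impI ballI)
      fix n show "is_basis (Fmod r n) (Bf n)" using P by blast
    next
      fix n b assume n: "1 \<le> n" and b: "b \<in> Bf n"
      obtain m where m: "n = Suc m" using n by (cases n) auto
      have "\<forall>e\<in>Bf (Suc m). minc m (Bf m) (dif r A (Suc m) e)" using G[of m] unfolding good_def by blast
      then have "minc m (Bf m) (dif r A (Suc m) b)" using b m by simp
      then have "cycle_min_supp r A Bf m (dif r A (Suc m) b)" by (rule minc_cycle)
      then show "cycle_min_supp r A Bf (n - 1) (dif r A n b)" using m by simp
    qed
    show "\<forall>n. \<forall>b\<in>Bf n. homog r deg n b" using P by blast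
    show "Bf 0 = C" by (fact B0)
  qed
qed


theorem mainTheorem6:
  fixes r :: "nat \<Rightarrow> nat"
    and deg :: "nat \<Rightarrow> nat \<Rightarrow> ('v::finite \<Rightarrow> int)"
    and A :: "nat \<Rightarrow> nat \<Rightarrow> nat \<Rightarrow> ('v, 'k::field) pring"
    and C :: "(nat \<Rightarrow> ('v, 'k) pring) set"
  assumes "min_graded_free_resolution r deg A"
    and "H0_torsion_free r A"
    and "is_basis (Fmod r 0) C"
    and "\<forall>c\<in>C. homog r deg 0 c"
  shows "\<exists>B. basis_min_supp r A B \<and> (\<forall>n. \<forall>b\<in>B n. homog r deg n b) \<and> B 0 = C"
  using main_aux[OF assms] .

end
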